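(* Let $\mathcal{S}$ be a finite skew translation generalized quadrangle of order $s$ with $s$ even, with elation group $G$ and associated $4$-gonal family $(G,\{A_i\}_{i=0}^s,\{A_i^*\}_{i=0}^s)$, and let $U_0:=\bigcap_{i=0}^s A_i^*$. Let $0\le i,j\le s$. Then: (1) if $g\in U_0$, then $|A_i^*\cap gG'|=|G'|$, and $|A_i\cap gG'|$ equals $1$ if $g\in G'$ and $0$ otherwise; (2) if $g\in U_0$, then $|A_i^*\cap g^G|=|g^G|$, and $|A_i\cap g^G|$ equals $1$ if $g=1$ and $0$ otherwise; (3) if $g\in A_j^*\setminus U_0$, then $|A_i^*\cap g^G|$ equals $|g^G|$ if $i=j$ and $0$ otherwise.
   Context: A generalized quadrangle of order $s$: each line has $s+1$ points, each point is on $s+1$ lines, and for each non-incident point-line pair $(P,\ell)$ there is a unique point on $\ell$ collinear with $P$. An elation about $P$ is an automorphism that is the identity or fixes each line through $P$ and no point not collinear with $P$; a symmetry about $P$ is an elation about $P$ fixing every point collinear with $P$. $\mathcal{S}$ is an elation generalized quadrangle with base point $P$ and elation group $G$ if $G$ consists of elations about $P$ and acts regularly on the points not collinear with $P$; it is a skew translation generalized quadrangle if $G$ contains a subgroup of $s$ symmetries about $P$. The associated $4$-gonal family: fix a point $y$ not collinear with $P$, let $M_0,\dots,M_s$ be the lines through $y$, let $z_i$ be the unique point of $M_i$ collinear with $P$, and let $A_i$, $A_i^*$ be the stabilizers in $G$ of $M_i$ and $z_i$ respectively. $g^G$ denotes the conjugacy class of $g$ and $G'$ the derived subgroup. *)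

theory Defs
  imports "HOL-Algebra.Algebra"
begin

definition collinear :: "('p \<Rightarrow> 'l \<Rightarrow> bool) \<Rightarrow> 'p \<Rightarrow> 'p \<Rightarrow> bool" where
  "collinear inc x y \<longleftrightarrow> (\<exists>l. inc x l \<and> inc y l)"

definition GQ :: "('p::finite \<Rightarrow> 'l::finite \<Rightarrow> bool) \<Rightarrow> nat \<Rightarrow> bool" where
  "GQ inc s \<longleftrightarrow>
     (\<forall>l. card {x. inc x l} = s + 1) \<and>
     (\<forall>x. card {l. inc x l} = s + 1) \<and>
     (\<forall>x y l m. x \<noteq> y \<and> inc x l \<and> inc y l \<and> inc x m \<and> inc y m \<longrightarrow> l = m) \<and>
     (\<forall>x l. \<not> inc x l \<longrightarrow> (\<exists>!y. inc y l \<and> collinear inc x y))"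

type_synonym ('p,'l) aut = "('p \<Rightarrow> 'p) \<times> ('l \<Rightarrow> 'l)"

definition automorphism :: "('p \<Rightarrow> 'l \<Rightarrow> bool) \<Rightarrow> ('p,'l) aut \<Rightarrow> bool" where
  "automorphism inc a \<longleftrightarrow> bij (fst a) \<and> bij (snd a) \<and>
     (\<forall>x l. inc x l \<longleftrightarrow> inc (fst a x) (snd a l))"

definition aut_group :: "('p,'l) aut set \<Rightarrow> ('p,'l) aut monoid" where
  "aut_group G = \<lparr>carrier = G, monoid.mult = (\<lambda>a b. (fst a \<circ> fst b, snd a \<circ> snd b)),
                   monoid.one = (id, id)\<rparr>"

definition aut_id :: "('p,'l) aut" where "aut_id = (id, id)"

definition elation :: "('p \<Rightarrow> 'l \<Rightarrow> bool) \<Rightarrow> 'p \<Rightarrow> ('p,'l) aut \<Rightarrow> bool" where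
  "elation inc P a \<longleftrightarrow> automorphism inc a \<and>
     (a = aut_id \<or>
      ((\<forall>l. inc P l \<longrightarrow> snd a l = l) \<and>
       (\<forall>x. \<not> collinear inc x P \<longrightarrow> fst a x \<noteq> x)))"

definition symmetry :: "('p \<Rightarrow> 'l \<Rightarrow> bool) \<Rightarrow> 'p \<Rightarrow> ('p,'l) aut \<Rightarrow> bool" where
  "symmetry inc P a \<longleftrightarrow> elation inc P a \<and> (\<forall>x. collinear inc x P \<longrightarrow> fst a x = x)"

definition EGQ :: "('p::finite \<Rightarrow> 'l::finite \<Rightarrow> bool) \<Rightarrow> nat \<Rightarrow> 'p \<Rightarrow> ('p,'l) aut set \<Rightarrow> bool" where
  "EGQ inc s P G \<longleftrightarrow> GQ inc s \<and> group (aut_group G) \<and>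
     (\<forall>a\<in>G. elation inc P a) \<and>
     (\<forall>x y. \<not> collinear inc x P \<and> \<not> collinear inc y P \<longrightarrow> (\<exists>!a. a \<in> G \<and> fst a x = y))"

definition STGQ :: "('p::finite \<Rightarrow> 'l::finite \<Rightarrow> bool) \<Rightarrow> nat \<Rightarrow> 'p \<Rightarrow> ('p,'l) aut set \<Rightarrow> bool" where
  "STGQ inc s P G \<longleftrightarrow> EGQ inc s P G \<and>
     (\<exists>C. subgroup C (aut_group G) \<and> card C = s \<and> (\<forall>a\<in>C. symmetry inc P a))"

text \<open>4-gonal family: for a line M through y, z(M) is the unique point on M collinear with P;
  A M is the stabilizer of M, Astar M the stabilizer of z(M).\<close>
definition zpt :: "('p \<Rightarrow> 'l \<Rightarrow> bool) \<Rightarrow> 'p \<Rightarrow> 'l \<Rightarrow> 'p" where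
  "zpt inc P M = (THE z. inc z M \<and> collinear inc z P)"

definition stabA :: "('p,'l) aut set \<Rightarrow> 'l \<Rightarrow> ('p,'l) aut set" where
  "stabA G M = {a \<in> G. snd a M = M}"

definition stabAstar :: "('p \<Rightarrow> 'l \<Rightarrow> bool) \<Rightarrow> 'p \<Rightarrow> ('p,'l) aut set \<Rightarrow> 'l \<Rightarrow> ('p,'l) aut set" where
  "stabAstar inc P G M = {a \<in> G. fst a (zpt inc P M) = zpt inc P M}"

definition conj_class :: "('a,'b) monoid_scheme \<Rightarrow> 'a \<Rightarrow> 'a set" where
  "conj_class H g = {h \<otimes>\<^bsub>H\<^esub> g \<otimes>\<^bsub>H\<^esub> inv\<^bsub>H\<^esub> h | h. h \<in> carrier H}"

end

theory Submission
  imports Defs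
begin

locale gq =
  fixes inc :: "'p::finite \<Rightarrow> 'l::finite \<Rightarrow> bool" and s :: nat
  assumes GQ: "GQ inc s" and s1: "s \<ge> 1"
begin

lemma lpts: "card {x. inc x l} = s + 1" using GQ unfolding GQ_def by blast
lemma plns: "card {l. inc x l} = s + 1" using GQ unfolding GQ_def by blast
lemma two_lines: "x \<noteq> y \<Longrightarrow> inc x l \<Longrightarrow> inc y l \<Longrightarrow> inc x m \<Longrightarrow> inc y m \<Longrightarrow> l = m"
  using GQ unfolding GQ_def by blast
lemma ax: "\<not> inc x l \<Longrightarrow> \<exists>!y. inc y l \<and> collinear inc x y"
  using GQ unfolding GQ_def by blast

lemma ax_uniq: "\<not> inc x l \<Longrightarrow> inc a l \<Longrightarrow> collinear inc x a \<Longrightarrow> inc b l \<Longrightarrow> collinear inc x b \<Longrightarrow> a = b"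
  using ax[of x l] by blast

lemma col_sym: "collinear inc x y = collinear inc y x"
  unfolding collinear_def by blast

lemma ex_line: "\<exists>l. inc x l"
proof -
  have "{l. inc x l} \<noteq> {}" using plns[of x] by (intro notI) simp
  thus ?thesis by blast
qed

lemma col_refl: "collinear inc x x"
  using ex_line unfolding collinear_def by blast

lemma tri: "inc x l \<Longrightarrow> inc y l \<Longrightarrow> x \<noteq> y \<Longrightarrow> collinear inc z x \<Longrightarrow> collinear inc z y \<Longrightarrow> inc z l"
  using ax_uniq[of z l x y] by blast

lemma card_pts_minus: "inc x l \<Longrightarrow> card {v. inc v l \<and> v \<noteq> x} = s"
proof -
  assume "inc x l"
  have "{v. inc v l \<and> v \<noteq> x} = {v. inc v l} - {x}" by blast
  thus ?thesis using lpts[of l] \<open>inc x l\<close> by (simp add: card_Diff_singleton)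
qed

lemma card_lines_minus: "inc x l \<Longrightarrow> card {m. inc x m \<and> m \<noteq> l} = s"
proof -
  assume "inc x l"
  have "{m. inc x m \<and> m \<noteq> l} = {m. inc x m} - {l}" by blast
  thus ?thesis using plns[of x] \<open>inc x l\<close> by (simp add: card_Diff_singleton)
qed

lemma other_point: "\<exists>w. inc w l \<and> w \<noteq> x"
proof -
  have "card ({v. inc v l} - {x}) \<ge> s" using lpts[of l]
    by (simp add: card_Diff_singleton_if)
  hence "{v. inc v l} - {x} \<noteq> {}" using s1 by (intro notI) simp
  thus ?thesis by blast
qed

lemma other_line: "\<exists>m. inc x m \<and> m \<noteq> l"
proof -
  have "card ({m. inc x m} - {l}) \<ge> s" using plns[of x]
    by (simp add: card_Diff_singleton_if)
  hence "{m. inc x m} - {l} \<noteq> {}" using s1 by (intro notI) simp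
  thus ?thesis by blast
qed

definition Q :: "'p \<Rightarrow> 'l \<Rightarrow> 'p set" where
  "Q w L = {v. collinear inc v w \<and> \<not> inc v L}"

lemma card_Q: assumes "inc w L" shows "card (Q w L) = s * s"
proof -
  have eq: "Q w L = (\<Union>m\<in>{m. inc w m \<and> m \<noteq> L}. {v. inc v m \<and> v \<noteq> w})"
  proof (intro Set.set_eqI iffI)
    fix v assume "v \<in> Q w L"
    then obtain m where m: "inc v m" "inc w m" "\<not> inc v L" unfolding Q_def collinear_def by blast
    hence "m \<noteq> L" "v \<noteq> w" using assms by auto
    thus "v \<in> (\<Union>m\<in>{m. inc w m \<and> m \<noteq> L}. {v. inc v m \<and> v \<noteq> w})" using m by blast
  next
    fix v assume "v \<in> (\<Union>m\<in>{m. inc w m \<and> m \<noteq> L}. {v. inc v m \<and> v \<noteq> w})"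
    then obtain m where m: "inc v m" "inc w m" "m \<noteq> L" "v \<noteq> w" by blast
    hence "\<not> inc v L" using two_lines assms by blast
    thus "v \<in> Q w L" using m unfolding Q_def collinear_def by blast
  qed
  have "card (\<Union>m\<in>{m. inc w m \<and> m \<noteq> L}. {v. inc v m \<and> v \<noteq> w})
        = (\<Sum>m\<in>{m. inc w m \<and> m \<noteq> L}. card {v. inc v m \<and> v \<noteq> w})"
  proof (rule card_UN_disjoint)
    show "\<forall>i\<in>{m. inc w m \<and> m \<noteq> L}. \<forall>j\<in>{m. inc w m \<and> m \<noteq> L}. i \<noteq> j \<longrightarrow>
       {v. inc v i \<and> v \<noteq> w} \<inter> {v. inc v j \<and> v \<noteq> w} = {}"
    proof (intro ballI impI)
      fix i j assume "i \<in> {m. inc w m \<and> m \<noteq> L}" "j \<in> {m. inc w m \<and> m \<noteq> L}" "i \<noteq> j"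
      thus "{v. inc v i \<and> v \<noteq> w} \<inter> {v. inc v j \<and> v \<noteq> w} = {}"
        using two_lines[of _ w i j] by blast
    qed
  qed auto
  also have "\<dots> = (\<Sum>m\<in>{m. inc w m \<and> m \<noteq> L}. s)"
    by (rule sum.cong) (auto simp: card_pts_minus)
  also have "\<dots> = s * s" using card_lines_minus[OF assms] by simp
  finally show ?thesis by (simp only: eq)
qed

lemma Q_noncol: assumes "inc P L" "inc w L" "w \<noteq> P" "v \<in> Q w L" shows "\<not> collinear inc v P"
  using assms tri[of P L w v] unfolding Q_def by blast

lemma card_N: "card {x. \<not> collinear inc x P} = s * (s * s)"
proof -
  obtain L where L: "inc P L" using ex_line by blast
  have eq: "{x. \<not> collinear inc x P} = (\<Union>w\<in>{w. inc w L \<and> w \<noteq> P}. Q w L)"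
  proof (intro Set.set_eqI iffI)
    fix u assume u: "u \<in> {x. \<not> collinear inc x P}"
    hence nu: "\<not> inc u L" using L unfolding collinear_def by blast
    then obtain w where w: "inc w L" "collinear inc u w" using ax by blast
    hence "w \<noteq> P" using u by auto
    thus "u \<in> (\<Union>w\<in>{w. inc w L \<and> w \<noteq> P}. Q w L)" using w nu unfolding Q_def by blast
  next
    fix u assume "u \<in> (\<Union>w\<in>{w. inc w L \<and> w \<noteq> P}. Q w L)"
    thus "u \<in> {x. \<not> collinear inc x P}" using Q_noncol[OF L] by blast
  qed
  have "card (\<Union>w\<in>{w. inc w L \<and> w \<noteq> P}. Q w L) = (\<Sum>w\<in>{w. inc w L \<and> w \<noteq> P}. card (Q w L))"
  proof (rule card_UN_disjoint)
    show "\<forall>i\<in>{w. inc w L \<and> w \<noteq> P}. \<forall>j\<in>{w. inc w L \<and> w \<noteq> P}. i \<noteq> j \<longrightarrow> Q i L \<inter> Q j L = {}"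
    proof (intro ballI impI)
      fix i j assume "i \<in> {w. inc w L \<and> w \<noteq> P}" "j \<in> {w. inc w L \<and> w \<noteq> P}" "i \<noteq> j"
      show "Q i L \<inter> Q j L = {}"
      proof (rule ccontr)
        assume "Q i L \<inter> Q j L \<noteq> {}"
        then obtain u where "u \<in> Q i L" "u \<in> Q j L" by blast
        hence "\<not> inc u L" "collinear inc u i" "collinear inc u j" unfolding Q_def by auto
        moreover have "inc i L" "inc j L" using \<open>i \<in> _\<close> \<open>j \<in> _\<close> by auto
        ultimately show False using ax_uniq[of u L i j] \<open>i \<noteq> j\<close> by blast
      qed
    qed
  qed auto
  also have "\<dots> = (\<Sum>w\<in>{w. inc w L \<and> w \<noteq> P}. s * s)"
    by (rule sum.cong) (auto simp: card_Q)
  also have "\<dots> = s * (s * s)" using card_pts_minus[OF L] by simp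
  finally show ?thesis by (simp only: eq)
qed

end

lemma (in group) cancel_l: "x \<in> carrier G \<Longrightarrow> y \<in> carrier G \<Longrightarrow> inv x \<otimes> (x \<otimes> y) = y"
  by (simp add: m_assoc[symmetric])
lemma (in group) cancel_l2: "x \<in> carrier G \<Longrightarrow> y \<in> carrier G \<Longrightarrow> x \<otimes> (inv x \<otimes> y) = y"
  by (simp add: m_assoc[symmetric])
lemma (in group) swap_eq:
  assumes "a \<in> carrier G" "b \<in> carrier G" "c \<in> carrier G" "d \<in> carrier G" "a \<otimes> b = c \<otimes> d"
  shows "inv c \<otimes> a = d \<otimes> inv b"
proof -
  have "inv c \<otimes> a = inv c \<otimes> (a \<otimes> b) \<otimes> inv b" using assms(1-4) by (simp add: m_assoc)
  also have "\<dots> = inv c \<otimes> (c \<otimes> d) \<otimes> inv b" using assms by simp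
  also have "\<dots> = d \<otimes> inv b" using assms by (simp add: cancel_l)
  finally show ?thesis .
qed

lemma ex1_eq: "Ex1 Q \<Longrightarrow> Q a \<Longrightarrow> Q b \<Longrightarrow> a = b" by blast

locale stg = gq inc s for inc :: "'p::finite \<Rightarrow> 'l::finite \<Rightarrow> bool" and s :: nat +
  fixes P :: 'p and EG :: "('p,'l) aut set" and y :: 'p and C :: "('p,'l) aut set"
  assumes grp: "group (aut_group EG)"
    and el: "a \<in> EG \<Longrightarrow> elation inc P a"
    and reg: "\<forall>x x'. \<not> collinear inc x P \<and> \<not> collinear inc x' P \<longrightarrow> (\<exists>!a. a \<in> EG \<and> fst a x = x')"
    and Csub: "subgroup C (aut_group EG)" and Ccard: "card C = s"
    and Csym: "\<forall>a\<in>C. symmetry inc P a"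
    and yN: "\<not> collinear inc y P"
    and s2: "s \<ge> 2"

sublocale stg \<subseteq> grp: group "aut_group EG" by (rule grp)

context stg
begin

abbreviation gr where "gr \<equiv> aut_group EG"

lemma carr[simp]: "carrier gr = EG" by (simp add: aut_group_def)
lemma multG: "a \<otimes>\<^bsub>gr\<^esub> b = (fst a \<circ> fst b, snd a \<circ> snd b)" by (simp add: aut_group_def)
lemma oneG: "\<one>\<^bsub>gr\<^esub> = (id, id)" by (simp add: aut_group_def)

lemma finG: "finite EG" by simp
lemma mcl[simp]: "a \<in> EG \<Longrightarrow> b \<in> EG \<Longrightarrow> a \<otimes>\<^bsub>gr\<^esub> b \<in> EG"
  using grp.m_closed by simp
lemma icl[simp]: "a \<in> EG \<Longrightarrow> inv\<^bsub>gr\<^esub> a \<in> EG"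
  using grp.inv_closed by simp

lemma idG: "(id, id) \<in> EG" using grp.one_closed oneG by simp

lemma fst_mult: "fst (a \<otimes>\<^bsub>gr\<^esub> b) = fst a \<circ> fst b" by (simp add: multG)
lemma snd_mult: "snd (a \<otimes>\<^bsub>gr\<^esub> b) = snd a \<circ> snd b" by (simp add: multG)

lemma fst_inv1: "a \<in> EG \<Longrightarrow> fst a (fst (inv\<^bsub>gr\<^esub> a) x) = x"
proof -
  assume a: "a \<in> EG"
  have "a \<otimes>\<^bsub>gr\<^esub> inv\<^bsub>gr\<^esub> a = (id,id)" using a oneG by simp
  hence "fst (a \<otimes>\<^bsub>gr\<^esub> inv\<^bsub>gr\<^esub> a) x = x" by simp
  thus ?thesis by (simp add: fst_mult)
qed

lemma fst_inv2: "a \<in> EG \<Longrightarrow> fst (inv\<^bsub>gr\<^esub> a) (fst a x) = x"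
proof -
  assume a: "a \<in> EG"
  have "inv\<^bsub>gr\<^esub> a \<otimes>\<^bsub>gr\<^esub> a = (id,id)" using a oneG by simp
  hence "fst (inv\<^bsub>gr\<^esub> a \<otimes>\<^bsub>gr\<^esub> a) x = x" by simp
  thus ?thesis by (simp add: fst_mult)
qed

lemma autG: "a \<in> EG \<Longrightarrow> automorphism inc a" using el unfolding elation_def by blast

lemma fixline: assumes a: "a \<in> EG" and l: "inc P l" shows "snd a l = l"
proof -
  have "a = aut_id \<or> (\<forall>l. inc P l \<longrightarrow> snd a l = l)" using el[OF a] unfolding elation_def by blast
  thus ?thesis
  proof
    assume "a = aut_id" thus ?thesis by (simp add: aut_id_def)
  next
    assume "\<forall>l. inc P l \<longrightarrow> snd a l = l" thus ?thesis using l by blast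
  qed
qed

lemma autinc: "a \<in> EG \<Longrightarrow> inc x l = inc (fst a x) (snd a l)"
  using autG unfolding automorphism_def by blast

lemma fixP: "a \<in> EG \<Longrightarrow> fst a P = P"
proof -
  assume a: "a \<in> EG"
  obtain l1 where l1: "inc P l1" using ex_line by blast
  obtain l2 where l2: "inc P l2" "l2 \<noteq> l1" using other_line by blast
  have "inc (fst a P) l1" "inc (fst a P) l2"
    using autinc[OF a, of P l1] autinc[OF a, of P l2] fixline[OF a] l1 l2 by auto
  thus ?thesis using two_lines[of "fst a P" P l1 l2] l1 l2 by blast
qed

lemma col_pres: "a \<in> EG \<Longrightarrow> collinear inc (fst a x) (fst a x') = collinear inc x x'"
proof
  assume a: "a \<in> EG"
  assume "collinear inc (fst a x) (fst a x')"
  then obtain m where m: "inc (fst a x) m" "inc (fst a x') m" unfolding collinear_def by blast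
  have "bij (snd a)" using autG[OF a] unfolding automorphism_def by blast
  then obtain l where "m = snd a l" by (metis bij_pointE)
  thus "collinear inc x x'" using m autinc[OF a] unfolding collinear_def by blast
next
  assume a: "a \<in> EG"
  assume "collinear inc x x'"
  thus "collinear inc (fst a x) (fst a x')" using autinc[OF a] unfolding collinear_def by blast
qed

lemma N_pres: "a \<in> EG \<Longrightarrow> collinear inc (fst a x) P = collinear inc x P"
  using col_pres[of a x P] fixP[of a] by simp

lemma reg1: "\<not> collinear inc x P \<Longrightarrow> \<not> collinear inc z P \<Longrightarrow> \<exists>!c. c \<in> EG \<and> fst c x = z"
  using reg by blast

lemma reg_uniq: assumes a: "a \<in> EG" and b: "b \<in> EG" and x: "\<not> collinear inc x P" and e: "fst a x = fst b x"
  shows "a = b"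
proof -
  have "\<not> collinear inc (fst a x) P" using N_pres a x by blast
  hence u: "\<exists>!c. c \<in> EG \<and> fst c x = fst a x" using reg1 x by blast
  have "a \<in> EG \<and> fst a x = fst a x" "b \<in> EG \<and> fst b x = fst a x" using a b e by auto
  thus "a = b" using ex1_eq[OF u] by blast
qed

lemma reg_ex: assumes "\<not> collinear inc x P" "\<not> collinear inc x' P" shows "\<exists>a\<in>EG. fst a x = x'"
  using reg1[OF assms] by blast

lemma fix_id: "a \<in> EG \<Longrightarrow> \<not> collinear inc x P \<Longrightarrow> fst a x = x \<Longrightarrow> a = \<one>\<^bsub>gr\<^esub>"
  using reg_uniq[of a "(id,id)" x] idG oneG by simp

lemma cardG: "card EG = s * (s * s)"
proof -
  have "bij_betw (\<lambda>a. fst a y) EG {x. \<not> collinear inc x P}"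
  proof (rule bij_betwI')
    show "\<And>a b. a \<in> EG \<Longrightarrow> b \<in> EG \<Longrightarrow> (fst a y = fst b y) = (a = b)" using reg_uniq yN by blast
    show "\<And>a. a \<in> EG \<Longrightarrow> fst a y \<in> {x. \<not> collinear inc x P}" using N_pres yN by simp
    show "\<And>x. x \<in> {x. \<not> collinear inc x P} \<Longrightarrow> \<exists>a\<in>EG. x = fst a y" using reg_ex yN by force
  qed
  thus ?thesis using card_N bij_betw_same_card by metis
qed


lemma PnM: "inc y M \<Longrightarrow> \<not> inc P M"
  using yN unfolding collinear_def by blast

lemma z_ex1: assumes "inc y M" shows "\<exists>!v. inc v M \<and> collinear inc v P"
proof -
  have "\<exists>!v. inc v M \<and> collinear inc P v" using ax PnM[OF assms] by blast
  thus ?thesis using col_sym by simp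
qed

lemma z_on: "inc y M \<Longrightarrow> inc (zpt inc P M) M"
  using theI'[OF z_ex1] unfolding zpt_def by blast

lemma z_col: "inc y M \<Longrightarrow> collinear inc (zpt inc P M) P"
  using theI'[OF z_ex1] unfolding zpt_def by blast

lemma z_uniq: "inc y M \<Longrightarrow> inc v M \<Longrightarrow> collinear inc v P \<Longrightarrow> v = zpt inc P M"
  using the1_equality[OF z_ex1] unfolding zpt_def by blast

lemma z_neP: "inc y M \<Longrightarrow> zpt inc P M \<noteq> P"
  using z_on PnM by metis

lemma z_ney: "inc y M \<Longrightarrow> zpt inc P M \<noteq> y"
  using z_col yN by metis

lemma z_coly: "inc y M \<Longrightarrow> collinear inc y (zpt inc P M)"
  using z_on unfolding collinear_def by blast

lemma yN': "\<not> collinear inc y P" by (rule yN)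

lemma fix_z: assumes M: "inc y M" and a: "a \<in> EG" and c: "collinear inc (fst a y) (zpt inc P M)"
  shows "fst a (zpt inc P M) = zpt inc P M"
proof -
  define z where "z = zpt inc P M"
  obtain L where L: "inc z L" "inc P L" using z_col[OF M] unfolding z_def collinear_def by blast
  have vN: "\<not> collinear inc (fst a y) P" using N_pres[OF a] yN by blast
  have vL: "\<not> inc (fst a y) L" using vN L(2) unfolding collinear_def by blast
  have "inc (fst a z) L" using autinc[OF a, of z L] fixline[OF a L(2)] L(1) by simp
  moreover have "collinear inc (fst a y) (fst a z)" using col_pres[OF a] z_coly[OF M] unfolding z_def by blast
  ultimately show ?thesis using ax_uniq[OF vL, of "fst a z" z] L(1) c unfolding z_def by blast
qed

definition Astar where "Astar M = stabAstar inc P EG M"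
definition AA where "AA M = stabA EG M"

lemma Astar_sub: "Astar M \<subseteq> EG" unfolding Astar_def stabAstar_def by blast
lemma AA_sub: "AA M \<subseteq> EG" unfolding AA_def stabA_def by blast

lemma card_Astar: assumes M: "inc y M" shows "card (Astar M) = s * s"
proof -
  define z where "z = zpt inc P M"
  obtain L where L: "inc z L" "inc P L" using z_col[OF M] unfolding z_def collinear_def by blast
  have "bij_betw (\<lambda>a. fst a y) (Astar M) (Q z L)"
  proof (rule bij_betwI')
    show "\<And>a b. a \<in> Astar M \<Longrightarrow> b \<in> Astar M \<Longrightarrow> (fst a y = fst b y) = (a = b)"
      using reg_uniq yN Astar_sub by blast
  next
    fix a assume a: "a \<in> Astar M"
    hence aG: "a \<in> EG" and fz: "fst a z = z" unfolding Astar_def stabAstar_def z_def by auto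
    have vN: "\<not> collinear inc (fst a y) P" using N_pres[OF aG] yN by blast
    have vL: "\<not> inc (fst a y) L" using vN L(2) unfolding collinear_def by blast
    have "collinear inc (fst a y) (fst a z)" using col_pres[OF aG] z_coly[OF M] unfolding z_def by blast
    thus "fst a y \<in> Q z L" using vL fz unfolding Q_def by simp
  next
    fix v assume v: "v \<in> Q z L"
    have zP: "z \<noteq> P" using z_neP[OF M] unfolding z_def .
    have vN: "\<not> collinear inc v P" using Q_noncol[OF L(2) L(1) zP v] .
    obtain a where a: "a \<in> EG" "fst a y = v" using reg_ex[OF yN vN] by blast
    have "collinear inc v z" using v unfolding Q_def by blast
    hence "fst a z = z" using fix_z[OF M a(1)] a(2) unfolding z_def by blast
    hence "a \<in> Astar M" using a(1) unfolding Astar_def stabAstar_def z_def by simp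
    thus "\<exists>a\<in>Astar M. v = fst a y" using a(2) by blast
  qed
  thus ?thesis using card_Q[OF L(1)] bij_betw_same_card by metis
qed

lemma card_AA: assumes M: "inc y M" shows "card (AA M) = s"
proof -
  define z where "z = zpt inc P M"
  have "bij_betw (\<lambda>a. fst a y) (AA M) {v. inc v M \<and> v \<noteq> z}"
  proof (rule bij_betwI')
    show "\<And>a b. a \<in> AA M \<Longrightarrow> b \<in> AA M \<Longrightarrow> (fst a y = fst b y) = (a = b)"
      using reg_uniq yN AA_sub by blast
  next
    fix a assume a: "a \<in> AA M"
    hence aG: "a \<in> EG" and fM: "snd a M = M" unfolding AA_def stabA_def by auto
    have vN: "\<not> collinear inc (fst a y) P" using N_pres[OF aG] yN by blast
    have "inc (fst a y) M" using autinc[OF aG, of y M] fM M by simp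
    moreover have "fst a y \<noteq> z" using vN z_col[OF M] unfolding z_def by metis
    ultimately show "fst a y \<in> {v. inc v M \<and> v \<noteq> z}" by simp
  next
    fix v assume v: "v \<in> {v. inc v M \<and> v \<noteq> z}"
    have vN: "\<not> collinear inc v P" using v z_uniq[OF M, of v] unfolding z_def by blast
    obtain a where a: "a \<in> EG" "fst a y = v" using reg_ex[OF yN vN] by blast
    have cvz: "collinear inc v z" using v z_on[OF M] unfolding collinear_def z_def by blast
    hence fz: "fst a z = z" using fix_z[OF M a(1)] a(2) unfolding z_def by blast
    have "inc v (snd a M)" using autinc[OF a(1), of y M] M a(2) by simp
    moreover have "inc z (snd a M)" using autinc[OF a(1), of z M] z_on[OF M] fz unfolding z_def by simp
    ultimately have "snd a M = M" using two_lines[of v z "snd a M" M] v z_on[OF M] unfolding z_def by blast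
    hence "a \<in> AA M" using a(1) unfolding AA_def stabA_def by simp
    thus "\<exists>a\<in>AA M. v = fst a y" using a(2) by blast
  qed
  thus ?thesis using card_pts_minus[OF z_on[OF M]] bij_betw_same_card unfolding z_def by metis
qed

lemma AA_Astar: assumes M: "inc y M" shows "AA M \<subseteq> Astar M"
proof
  fix a assume a: "a \<in> AA M"
  hence aG: "a \<in> EG" and fM: "snd a M = M" unfolding AA_def stabA_def by auto
  define z where "z = zpt inc P M"
  have "inc (fst a z) M" using autinc[OF aG, of z M] fM z_on[OF M] unfolding z_def by simp
  moreover have "collinear inc (fst a z) P" using N_pres[OF aG] z_col[OF M] unfolding z_def by blast
  ultimately have "fst a z = z" using z_uniq[OF M] unfolding z_def by blast
  thus "a \<in> Astar M" using aG unfolding Astar_def stabAstar_def z_def by simp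
qed


lemma snd_inv1: "a \<in> EG \<Longrightarrow> snd a (snd (inv\<^bsub>gr\<^esub> a) x) = x"
proof -
  assume a: "a \<in> EG"
  have "a \<otimes>\<^bsub>gr\<^esub> inv\<^bsub>gr\<^esub> a = (id,id)" using a oneG by simp
  hence "snd (a \<otimes>\<^bsub>gr\<^esub> inv\<^bsub>gr\<^esub> a) x = x" by simp
  thus ?thesis by (simp add: snd_mult)
qed

lemma snd_inv2: "a \<in> EG \<Longrightarrow> snd (inv\<^bsub>gr\<^esub> a) (snd a x) = x"
proof -
  assume a: "a \<in> EG"
  have "inv\<^bsub>gr\<^esub> a \<otimes>\<^bsub>gr\<^esub> a = (id,id)" using a oneG by simp
  hence "snd (inv\<^bsub>gr\<^esub> a \<otimes>\<^bsub>gr\<^esub> a) x = x" by simp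
  thus ?thesis by (simp add: snd_mult)
qed

lemma stabpt_subgroup: "subgroup {a \<in> EG. fst a z = z} gr"
proof (rule grp.subgroupI)
  show "{a \<in> EG. fst a z = z} \<subseteq> carrier gr" by auto
  have "(id,id) \<in> {a \<in> EG. fst a z = z}" using idG by simp
  thus "{a \<in> EG. fst a z = z} \<noteq> {}" by blast
  fix a assume "a \<in> {a \<in> EG. fst a z = z}"
  hence a: "a \<in> EG" "fst a z = z" by auto
  have "fst (inv\<^bsub>gr\<^esub> a) z = z" using fst_inv2[OF a(1), of z] a(2) by simp
  thus "inv\<^bsub>gr\<^esub> a \<in> {a \<in> EG. fst a z = z}" using a grp.inv_closed by auto
next
  fix a b assume "a \<in> {a \<in> EG. fst a z = z}" "b \<in> {a \<in> EG. fst a z = z}"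
  thus "a \<otimes>\<^bsub>gr\<^esub> b \<in> {a \<in> EG. fst a z = z}" using grp.m_closed by (auto simp: fst_mult)
qed

lemma stabln_subgroup: "subgroup {a \<in> EG. snd a M = M} gr"
proof (rule grp.subgroupI)
  show "{a \<in> EG. snd a M = M} \<subseteq> carrier gr" by auto
  have "(id,id) \<in> {a \<in> EG. snd a M = M}" using idG by simp
  thus "{a \<in> EG. snd a M = M} \<noteq> {}" by blast
  fix a assume "a \<in> {a \<in> EG. snd a M = M}"
  hence a: "a \<in> EG" "snd a M = M" by auto
  have "snd (inv\<^bsub>gr\<^esub> a) M = M" using snd_inv2[OF a(1), of M] a(2) by simp
  thus "inv\<^bsub>gr\<^esub> a \<in> {a \<in> EG. snd a M = M}" using a grp.inv_closed by auto
next
  fix a b assume "a \<in> {a \<in> EG. snd a M = M}" "b \<in> {a \<in> EG. snd a M = M}"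
  thus "a \<otimes>\<^bsub>gr\<^esub> b \<in> {a \<in> EG. snd a M = M}" using grp.m_closed by (auto simp: snd_mult)
qed

lemma Astar_subgroup: "subgroup (Astar M) gr"
  unfolding Astar_def stabAstar_def by (rule stabpt_subgroup)

lemma AA_subgroup: "subgroup (AA M) gr"
  unfolding AA_def stabA_def by (rule stabln_subgroup)

definition SS where "SS = {a \<in> EG. \<forall>x. collinear inc x P \<longrightarrow> fst a x = x}"

lemma SS_sub: "SS \<subseteq> EG" unfolding SS_def by blast

lemma SS_subgroup: "subgroup SS gr"
proof (rule grp.subgroupI)
  show "SS \<subseteq> carrier gr" unfolding SS_def by auto
  have "(id,id) \<in> SS" using idG unfolding SS_def by simp
  thus "SS \<noteq> {}" by blast
  fix a assume "a \<in> SS"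
  hence a: "a \<in> EG" "\<And>x. collinear inc x P \<Longrightarrow> fst a x = x" unfolding SS_def by auto
  have "\<And>x. collinear inc x P \<Longrightarrow> fst (inv\<^bsub>gr\<^esub> a) x = x"
  proof -
    fix x assume "collinear inc x P"
    thus "fst (inv\<^bsub>gr\<^esub> a) x = x" using fst_inv2[OF a(1), of x] a(2) by simp
  qed
  thus "inv\<^bsub>gr\<^esub> a \<in> SS" using a grp.inv_closed unfolding SS_def by auto
next
  fix a b assume "a \<in> SS" "b \<in> SS"
  thus "a \<otimes>\<^bsub>gr\<^esub> b \<in> SS" using grp.m_closed unfolding SS_def by (auto simp: fst_mult)
qed

lemma C_SS: "C \<subseteq> SS"
proof
  fix a assume a: "a \<in> C"
  hence "a \<in> EG" using subgroup.subset[OF Csub] by auto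
  moreover have "\<forall>x. collinear inc x P \<longrightarrow> fst a x = x" using Csym a unfolding symmetry_def
    by (metis col_sym)
  ultimately show "a \<in> SS" unfolding SS_def by simp
qed

lemma SS_Astar: "inc y M \<Longrightarrow> SS \<subseteq> Astar M"
  using z_col unfolding SS_def Astar_def stabAstar_def by blast

lemma AA_SS: assumes M: "inc y M" and a: "a \<in> AA M" "a \<in> SS" shows "a = \<one>\<^bsub>gr\<^esub>"
proof -
  define z where "z = zpt inc P M"
  have aG: "a \<in> EG" and fM: "snd a M = M" using a unfolding AA_def stabA_def by auto
  have fx: "\<And>x. collinear inc x P \<Longrightarrow> fst a x = x" using a unfolding SS_def by auto
  obtain L where L: "inc z L" "inc P L" using z_col[OF M] unfolding z_def collinear_def by blast
  obtain L' where L': "inc P L'" "L' \<noteq> L" using other_line by blast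
  obtain w where w: "inc w L'" "w \<noteq> P" using other_point by blast
  have zP: "z \<noteq> P" using z_neP[OF M] unfolding z_def .
  have wP: "collinear inc w P" using w L' unfolding collinear_def by blast
  have nwz: "\<not> collinear inc w z"
  proof
    assume "collinear inc w z"
    hence "inc w L" using tri[OF L(2) L(1) zP[symmetric] wP] by blast
    thus False using two_lines[OF w(2) _ L(2) w(1) L'(1)] L'(2) by blast
  qed
  have wM: "\<not> inc w M"
  proof
    assume "inc w M" thus False using nwz z_on[OF M] unfolding z_def collinear_def by blast
  qed
  obtain u where u: "inc u M" "collinear inc w u" using ax[OF wM] by blast
  have uz: "u \<noteq> z" using u nwz by blast
  have uN: "\<not> collinear inc u P" using z_uniq[OF M u(1)] uz unfolding z_def by blast
  have "inc (fst a u) M" using autinc[OF aG, of u M] fM u(1) by simp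
  moreover have "collinear inc w (fst a u)" using col_pres[OF aG, of w u] fx[OF wP] u(2) by simp
  ultimately have "fst a u = u" using ax_uniq[OF wM _ _ u(1) u(2)] by blast
  thus ?thesis using fix_id[OF aG uN] by blast
qed

lemma AA_Astar_other: assumes Mi: "inc y Mi" and Mj: "inc y Mj" and ne: "Mi \<noteq> Mj"
  and a: "a \<in> AA Mi" "a \<in> Astar Mj" shows "a = \<one>\<^bsub>gr\<^esub>"
proof -
  define z where "z = zpt inc P Mj"
  have aG: "a \<in> EG" and fM: "snd a Mi = Mi" and fz: "fst a z = z"
    using a unfolding AA_def stabA_def Astar_def stabAstar_def z_def by auto
  have zy: "z \<noteq> y" using z_ney[OF Mj] unfolding z_def .
  have zMi: "\<not> inc z Mi"
  proof
    assume zi: "inc z Mi"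
    have zMj: "inc z Mj" using z_on[OF Mj] unfolding z_def .
    show False using two_lines[OF zy zi Mi zMj Mj] ne by blast
  qed
  have "inc (fst a y) Mi" using autinc[OF aG, of y Mi] fM Mi by simp
  moreover have "collinear inc z (fst a y)" using col_pres[OF aG, of z y] fz z_coly[OF Mj] col_sym
    unfolding z_def by metis
  moreover have "collinear inc z y" using z_coly[OF Mj] col_sym unfolding z_def by metis
  ultimately have "fst a y = y" using ax_uniq[OF zMi _ _ Mi] by blast
  thus ?thesis using fix_id[OF aG yN] by blast
qed

lemma s_pos: "s > 0" using s1 by simp

lemma card_SS_and_decomp: assumes M: "inc y M"
  shows "card SS = s \<and> Astar M = (\<lambda>(a,b). a \<otimes>\<^bsub>gr\<^esub> b) ` (AA M \<times> SS)"
proof -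
  let ?f = "\<lambda>(a,b). a \<otimes>\<^bsub>gr\<^esub> b"
  have inj: "inj_on ?f (AA M \<times> SS)"
  proof (rule inj_onI, clarify)
    fix a b a' b' assume a: "a \<in> AA M" "b \<in> SS" "a' \<in> AA M" "b' \<in> SS" and e: "a \<otimes>\<^bsub>gr\<^esub> b = a' \<otimes>\<^bsub>gr\<^esub> b'"
    have G: "a \<in> EG" "b \<in> EG" "a' \<in> EG" "b' \<in> EG" using a AA_sub SS_sub by auto
    have e2: "inv\<^bsub>gr\<^esub> a' \<otimes>\<^bsub>gr\<^esub> a = b' \<otimes>\<^bsub>gr\<^esub> inv\<^bsub>gr\<^esub> b"
      using grp.swap_eq[of a b a' b'] G e by simp
    have "inv\<^bsub>gr\<^esub> a' \<otimes>\<^bsub>gr\<^esub> a \<in> AA M"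
      using AA_subgroup a by (simp add: subgroup.m_closed subgroup.m_inv_closed)
    moreover have "b' \<otimes>\<^bsub>gr\<^esub> inv\<^bsub>gr\<^esub> b \<in> SS"
      using SS_subgroup a by (simp add: subgroup.m_closed subgroup.m_inv_closed)
    ultimately have one: "inv\<^bsub>gr\<^esub> a' \<otimes>\<^bsub>gr\<^esub> a = \<one>\<^bsub>gr\<^esub>" using AA_SS[OF M] e2 by simp
    hence "a = a' \<otimes>\<^bsub>gr\<^esub> \<one>\<^bsub>gr\<^esub>" using grp.inv_solve_left'[OF grp.one_closed, of a' a] G by simp
    hence "a = a'" using G by simp
    thus "a = a' \<and> b = b'" using e G by simp
  qed
  have img: "?f ` (AA M \<times> SS) \<subseteq> Astar M"
  proof (rule subsetI)
    fix x assume "x \<in> ?f ` (AA M \<times> SS)"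
    then obtain a b where ab: "a \<in> AA M" "b \<in> SS" "x = a \<otimes>\<^bsub>gr\<^esub> b" by auto
    hence "a \<in> Astar M" "b \<in> Astar M" using AA_Astar[OF M] SS_Astar[OF M] by auto
    thus "x \<in> Astar M" using subgroup.m_closed[OF Astar_subgroup] ab(3) by blast
  qed
  have c1: "card (?f ` (AA M \<times> SS)) = s * card SS"
    using card_image[OF inj] card_AA[OF M] by (simp add: card_cartesian_product)
  have "s * card SS \<le> s * s" using c1 card_mono[OF _ img] card_Astar[OF M] by simp
  hence le: "card SS \<le> s" using s_pos by simp
  have "card C \<le> card SS" using card_mono[OF _ C_SS] by simp
  hence cS: "card SS = s" using le Ccard by simp
  hence "card (?f ` (AA M \<times> SS)) = card (Astar M)" using c1 card_Astar[OF M] by simp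
  hence "?f ` (AA M \<times> SS) = Astar M" using card_subset_eq[OF _ img] by simp
  thus ?thesis using cS by simp
qed

lemma card_SS: "card SS = s"
proof -
  obtain M where "inc y M" using ex_line by blast
  thus ?thesis using card_SS_and_decomp by blast
qed

lemma decomp: assumes "inc y M" "x \<in> Astar M" shows "\<exists>a\<in>AA M. \<exists>b\<in>SS. x = a \<otimes>\<^bsub>gr\<^esub> b"
proof -
  have "x \<in> (\<lambda>(a,b). a \<otimes>\<^bsub>gr\<^esub> b) ` (AA M \<times> SS)" using card_SS_and_decomp[OF assms(1)] assms(2) by simp
  thus ?thesis by force
qed


abbreviation gm (infixl "\<cdot>" 70) where "a \<cdot> b \<equiv> a \<otimes>\<^bsub>gr\<^esub> b"
abbreviation gi where "gi a \<equiv> inv\<^bsub>gr\<^esub> a"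
abbreviation g1 where "g1 \<equiv> \<one>\<^bsub>gr\<^esub>"

lemma one_EG[simp]: "g1 \<in> EG" using grp.one_closed by simp

lemma inter_SS: assumes Mi: "inc y Mi" and Mj: "inc y Mj" and ne: "Mi \<noteq> Mj"
  and x: "x \<in> Astar Mi" "x \<in> Astar Mj" shows "x \<in> SS"
proof -
  obtain a b where ab: "a \<in> AA Mi" "b \<in> SS" "x = a \<cdot> b" using decomp[OF Mi x(1)] by blast
  have G: "a \<in> EG" "b \<in> EG" "x \<in> EG" using ab(1,2) x(1) AA_sub[of Mi] SS_sub Astar_sub[of Mi] by blast+
  have "a = x \<cdot> gi b" using grp.inv_solve_right[of a x b] G ab(3) by simp
  moreover have "gi b \<in> Astar Mj" using SS_Astar[OF Mj] ab(2) subgroup.m_inv_closed[OF Astar_subgroup] by blast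
  ultimately have "a \<in> Astar Mj" using x(2) subgroup.m_closed[OF Astar_subgroup] by simp
  hence "a = g1" using AA_Astar_other[OF Mi Mj ne ab(1)] by blast
  thus ?thesis using ab G by simp
qed

lemma SS_normal: assumes h: "h \<in> EG" and sg: "g \<in> SS" shows "h \<cdot> g \<cdot> gi h \<in> SS"
proof -
  have G: "g \<in> EG" using sg SS_sub by auto
  have fx: "\<And>x. collinear inc x P \<Longrightarrow> fst g x = x" using sg unfolding SS_def by auto
  have "\<And>x. collinear inc x P \<Longrightarrow> fst (h \<cdot> g \<cdot> gi h) x = x"
  proof -
    fix x assume x: "collinear inc x P"
    have hi: "gi h \<in> EG" using h by simp
    have "collinear inc (fst (gi h) x) P" using N_pres[OF hi] x by blast
    hence "fst g (fst (gi h) x) = fst (gi h) x" using fx by blast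
    thus "fst (h \<cdot> g \<cdot> gi h) x = x" using fst_inv1[OF h] by (simp add: fst_mult)
  qed
  moreover have "h \<cdot> g \<cdot> gi h \<in> EG" using h G by simp
  ultimately show ?thesis unfolding SS_def by simp
qed

lemma SS_normal': assumes h: "h \<in> EG" and sg: "g \<in> SS" shows "gi h \<cdot> g \<cdot> h \<in> SS"
  using SS_normal[of "gi h" g] h sg by simp

lemma two_lines_y: "\<exists>M M'. inc y M \<and> inc y M' \<and> M \<noteq> M'"
  using ex_line other_line by blast

lemma other_line_y: "\<exists>M'. inc y M' \<and> M' \<noteq> M" using other_line by blast

lemma arith1: "(s::nat) \<ge> 1 \<Longrightarrow> s + (s + 1) * (s * s - s) = s * (s * s)"
proof -
  assume "s \<ge> 1"
  then obtain k where k: "s = Suc k" by (cases s) auto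
  have "s * s - s = s * k" using k by (simp add: algebra_simps)
  thus ?thesis using k by (simp add: algebra_simps)
qed

lemma union_eq: "EG = (\<Union>M\<in>{M. inc y M}. Astar M)"
proof -
  let ?Y = "{M. inc y M}"
  let ?U = "\<Union>M\<in>?Y. Astar M"
  have sub: "?U \<subseteq> EG" using Astar_sub by blast
  obtain M0 where M0: "inc y M0" using ex_line by blast
  have eq: "?U = SS \<union> (\<Union>M\<in>?Y. Astar M - SS)" using SS_Astar M0 by blast
  have c2: "card (\<Union>M\<in>?Y. Astar M - SS) = (\<Sum>M\<in>?Y. card (Astar M - SS))"
  proof (rule card_UN_disjoint)
    show "\<forall>i\<in>?Y. \<forall>j\<in>?Y. i \<noteq> j \<longrightarrow> (Astar i - SS) \<inter> (Astar j - SS) = {}"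
      using inter_SS by blast
  qed auto
  also have "\<dots> = (\<Sum>M\<in>?Y. s * s - s)"
  proof (rule sum.cong)
    fix M assume "M \<in> ?Y"
    hence M: "inc y M" by simp
    show "card (Astar M - SS) = s * s - s"
      using card_Diff_subset[OF _ SS_Astar[OF M]] card_Astar[OF M] card_SS by simp
  qed simp
  also have "\<dots> = (s + 1) * (s * s - s)" using plns[of y] by simp
  finally have c2': "card (\<Union>M\<in>?Y. Astar M - SS) = (s + 1) * (s * s - s)" .
  have "card ?U = card SS + card (\<Union>M\<in>?Y. Astar M - SS)"
    unfolding eq by (rule card_Un_disjoint) auto
  also have "\<dots> = s * (s * s)" using c2' card_SS arith1 s1 by simp
  finally have "card ?U = card EG" using cardG by simp
  thus ?thesis using card_subset_eq[OF _ sub] by simp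
qed

lemma in_some_Astar: "x \<in> EG \<Longrightarrow> \<exists>M. inc y M \<and> x \<in> Astar M"
  using union_eq by blast

lemma prod_decomp: assumes Mi: "inc y Mi" and Mj: "inc y Mj" and ne: "Mi \<noteq> Mj" and x: "x \<in> EG"
  shows "\<exists>a\<in>AA Mi. \<exists>b\<in>Astar Mj. x = a \<cdot> b"
proof -
  let ?f = "\<lambda>(a,b). a \<cdot> b"
  have inj: "inj_on ?f (AA Mi \<times> Astar Mj)"
  proof (rule inj_onI, clarify)
    fix a b a' b' assume a: "a \<in> AA Mi" "b \<in> Astar Mj" "a' \<in> AA Mi" "b' \<in> Astar Mj" and e: "a \<cdot> b = a' \<cdot> b'"
    have G: "a \<in> EG" "b \<in> EG" "a' \<in> EG" "b' \<in> EG" using a AA_sub Astar_sub by auto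
    have e2: "gi a' \<cdot> a = b' \<cdot> gi b"
      using grp.swap_eq[of a b a' b'] G e by simp
    have "gi a' \<cdot> a \<in> AA Mi"
      using AA_subgroup a by (simp add: subgroup.m_closed subgroup.m_inv_closed)
    moreover have "b' \<cdot> gi b \<in> Astar Mj"
      using Astar_subgroup a by (simp add: subgroup.m_closed subgroup.m_inv_closed)
    ultimately have one: "gi a' \<cdot> a = g1" using AA_Astar_other[OF Mi Mj ne] e2 by simp
    hence "a = a' \<cdot> g1" using grp.inv_solve_left'[OF grp.one_closed, of a' a] G by simp
    hence "a = a'" using G by simp
    thus "a = a' \<and> b = b'" using e G by simp
  qed
  have img: "?f ` (AA Mi \<times> Astar Mj) \<subseteq> EG"
  proof (rule subsetI)
    fix x assume "x \<in> ?f ` (AA Mi \<times> Astar Mj)"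
    then obtain a b where ab: "a \<in> AA Mi" "b \<in> Astar Mj" "x = a \<cdot> b" by auto
    hence "a \<in> EG" "b \<in> EG" using AA_sub[of Mi] Astar_sub[of Mj] by blast+
    thus "x \<in> EG" using ab(3) by simp
  qed
  have "card (?f ` (AA Mi \<times> Astar Mj)) = s * (s * s)"
    using card_image[OF inj] card_AA[OF Mi] card_Astar[OF Mj] by (simp add: card_cartesian_product)
  hence "?f ` (AA Mi \<times> Astar Mj) = EG" using card_subset_eq[OF _ img] cardG by simp
  thus ?thesis using x by force
qed

lemma Astar_normal: assumes M: "inc y M" and k: "k \<in> Astar M" and x: "x \<in> EG"
  shows "gi x \<cdot> k \<cdot> x \<in> Astar M"
proof -
  have kG: "k \<in> EG" using k Astar_sub by auto
  have cG: "gi x \<cdot> k \<cdot> x \<in> EG" using kG x by simp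
  obtain M' where M': "inc y M'" "gi x \<cdot> k \<cdot> x \<in> Astar M'" using in_some_Astar[OF cG] by blast
  show ?thesis
  proof (cases "M' = M")
    case True thus ?thesis using M' by simp
  next
    case False
    obtain a b where ab: "a \<in> AA M" "b \<in> Astar M'" "x = a \<cdot> b"
      using prod_decomp[OF M M'(1) False[symmetric] x] by blast
    have G: "a \<in> EG" "b \<in> EG" using ab AA_sub Astar_sub by auto
    have aA: "a \<in> Astar M" using AA_Astar[OF M] ab(1) by auto
    have t1: "gi a \<cdot> k \<cdot> a \<in> Astar M"
      using aA k subgroup.m_closed[OF Astar_subgroup] subgroup.m_inv_closed[OF Astar_subgroup] by blast
    have ia: "gi a = b \<cdot> gi x"
    proof -
      have "gi x = gi b \<cdot> gi a" using ab(3) G grp.inv_mult_group by simp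
      hence "b \<cdot> gi x = b \<cdot> (gi b \<cdot> gi a)" by simp
      also have "\<dots> = gi a" using G grp.cancel_l2 by simp
      finally show ?thesis by simp
    qed
    have aa: "a = x \<cdot> gi b" using grp.inv_solve_right[of a x b] G x ab(3) by simp
    have "gi a \<cdot> k \<cdot> a = (b \<cdot> gi x) \<cdot> k \<cdot> a" using ia by simp
    also have "\<dots> = (b \<cdot> gi x) \<cdot> k \<cdot> (x \<cdot> gi b)" using aa by simp
    also have "\<dots> = b \<cdot> (gi x \<cdot> k \<cdot> x) \<cdot> gi b" using G x kG by (simp add: grp.m_assoc)
    finally have "gi a \<cdot> k \<cdot> a = b \<cdot> (gi x \<cdot> k \<cdot> x) \<cdot> gi b" .
    moreover have "b \<cdot> (gi x \<cdot> k \<cdot> x) \<cdot> gi b \<in> Astar M'"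
      using ab(2) M'(2) subgroup.m_closed[OF Astar_subgroup] subgroup.m_inv_closed[OF Astar_subgroup] by blast
    ultimately have tS: "gi a \<cdot> k \<cdot> a \<in> SS" using inter_SS[OF M M'(1) False[symmetric] t1] by simp
    have "k = a \<cdot> (gi a \<cdot> k \<cdot> a) \<cdot> gi a" using G kG by (simp add: grp.m_assoc grp.cancel_l2)
    hence kS: "k \<in> SS" using SS_normal[OF G(1) tS] by simp
    have "gi x \<cdot> k \<cdot> x \<in> SS" using SS_normal'[OF x kS] .
    thus ?thesis using SS_Astar[OF M] by blast
  qed
qed

lemma Astar_normal2: assumes M: "inc y M" and k: "k \<in> Astar M" and x: "x \<in> EG"
  shows "x \<cdot> k \<cdot> gi x \<in> Astar M"
  using Astar_normal[OF M k, of "gi x"] x by simp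


lemma comm_diff: assumes M: "inc y M" and M': "inc y M'" and ne: "M \<noteq> M'"
  and x: "x \<in> Astar M" and w: "w \<in> Astar M'"
  shows "x \<cdot> w \<cdot> gi x \<cdot> gi w \<in> SS"
proof -
  have G: "x \<in> EG" "w \<in> EG" using x w Astar_sub by blast+
  have "x \<cdot> w \<cdot> gi x \<in> Astar M'" using Astar_normal2[OF M' w G(1)] .
  hence A1: "x \<cdot> w \<cdot> gi x \<cdot> gi w \<in> Astar M'"
    using w subgroup.m_closed[OF Astar_subgroup] subgroup.m_inv_closed[OF Astar_subgroup] by blast
  have "gi x \<in> Astar M" using x subgroup.m_inv_closed[OF Astar_subgroup] by blast
  hence "w \<cdot> gi x \<cdot> gi w \<in> Astar M" using Astar_normal2[OF M _ G(2)] by blast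
  hence "x \<cdot> (w \<cdot> gi x \<cdot> gi w) \<in> Astar M" using x subgroup.m_closed[OF Astar_subgroup] by blast
  moreover have "x \<cdot> (w \<cdot> gi x \<cdot> gi w) = x \<cdot> w \<cdot> gi x \<cdot> gi w" using G by (simp add: grp.m_assoc)
  ultimately have A2: "x \<cdot> w \<cdot> gi x \<cdot> gi w \<in> Astar M" by simp
  show ?thesis using inter_SS[OF M M' ne A2 A1] .
qed

lemma comm_ident: assumes "x \<in> EG" "w \<in> EG" "z \<in> EG"
  shows "x \<cdot> w \<cdot> gi x \<cdot> gi w =
    (x \<cdot> (w \<cdot> z) \<cdot> gi x \<cdot> gi (w \<cdot> z)) \<cdot> (w \<cdot> gi (x \<cdot> z \<cdot> gi x \<cdot> gi z) \<cdot> gi w)"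
  using assms by (simp add: grp.m_assoc grp.inv_mult_group grp.cancel_l grp.cancel_l2)

lemma comm_all: assumes x: "x \<in> EG" and w: "w \<in> EG" shows "x \<cdot> w \<cdot> gi x \<cdot> gi w \<in> SS"
proof -
  obtain M1 where M1: "inc y M1" "x \<in> Astar M1" using in_some_Astar[OF x] by blast
  obtain M2 where M2: "inc y M2" "w \<in> Astar M2" using in_some_Astar[OF w] by blast
  show ?thesis
  proof (cases "M1 = M2")
    case False thus ?thesis using comm_diff[OF M1(1) M2(1) False M1(2) M2(2)] by simp
  next
    case True
    obtain M' where M': "inc y M'" "M' \<noteq> M1" using other_line by blast
    have "card SS < card (Astar M')" using card_SS card_Astar[OF M'(1)] s2
      by (simp add: less_le_trans[of s "2 * s" "s * s"])
    hence "Astar M' - SS \<noteq> {}" using SS_Astar[OF M'(1)] by (metis Diff_eq_empty_iff card_mono finite_class.finite leD)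
    then obtain z where z: "z \<in> Astar M'" "z \<notin> SS" by blast
    have zG: "z \<in> EG" using z Astar_sub by blast
    obtain M3 where M3: "inc y M3" "w \<cdot> z \<in> Astar M3" using in_some_Astar[of "w \<cdot> z"] w zG by auto
    have ne3: "M1 \<noteq> M3"
    proof
      assume e: "M1 = M3"
      have "gi w \<in> Astar M1" using M2(2) True subgroup.m_inv_closed[OF Astar_subgroup] by blast
      hence "gi w \<cdot> (w \<cdot> z) \<in> Astar M1" using M3(2) e subgroup.m_closed[OF Astar_subgroup] by blast
      hence "z \<in> Astar M1" using w zG by (simp add: grp.cancel_l)
      hence "z \<in> SS" using inter_SS[OF M1(1) M'(1) M'(2)[symmetric] _ z(1)] by blast
      thus False using z(2) by blast
    qed
    have al: "x \<cdot> (w \<cdot> z) \<cdot> gi x \<cdot> gi (w \<cdot> z) \<in> SS" using comm_diff[OF M1(1) M3(1) ne3 M1(2) M3(2)] .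
    have be: "x \<cdot> z \<cdot> gi x \<cdot> gi z \<in> SS" using comm_diff[OF M1(1) M'(1) M'(2)[symmetric] M1(2) z(1)] .
    have "gi (x \<cdot> z \<cdot> gi x \<cdot> gi z) \<in> SS" using be subgroup.m_inv_closed[OF SS_subgroup] by blast
    hence "w \<cdot> gi (x \<cdot> z \<cdot> gi x \<cdot> gi z) \<cdot> gi w \<in> SS" using SS_normal[OF w] by blast
    hence "(x \<cdot> (w \<cdot> z) \<cdot> gi x \<cdot> gi (w \<cdot> z)) \<cdot> (w \<cdot> gi (x \<cdot> z \<cdot> gi x \<cdot> gi z) \<cdot> gi w) \<in> SS"
      using al subgroup.m_closed[OF SS_subgroup] by blast
    thus ?thesis using comm_ident[OF x w zG] by simp
  qed
qed

lemma derived_SS: "derived gr EG \<subseteq> SS"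
  unfolding derived_def
proof (rule grp.generate_subgroup_incl[OF _ SS_subgroup])
  show "derived_set gr EG \<subseteq> SS" using comm_all by blast
qed

lemma U0_eq: "EG \<inter> (\<Inter>M\<in>{M. inc y M}. Astar M) = SS"
proof
  show "SS \<subseteq> EG \<inter> (\<Inter>M\<in>{M. inc y M}. Astar M)" using SS_sub SS_Astar by blast
  obtain M M' where MM: "inc y M" "inc y M'" "M \<noteq> M'" using two_lines_y by blast
  show "EG \<inter> (\<Inter>M\<in>{M. inc y M}. Astar M) \<subseteq> SS"
  proof
    fix x assume "x \<in> EG \<inter> (\<Inter>M\<in>{M. inc y M}. Astar M)"
    hence "x \<in> Astar M" "x \<in> Astar M'" using MM by auto
    thus "x \<in> SS" using inter_SS[OF MM] by blast
  qed
qed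


lemma D_sub: "derived gr EG \<subseteq> SS" by (rule derived_SS)
lemma D_subgroup: "subgroup (derived gr EG) gr" using grp.derived_is_subgroup[of EG] by simp

lemma coset_img: "g <#\<^bsub>gr\<^esub> D = (\<lambda>h. g \<cdot> h) ` D" unfolding l_coset_def by auto

lemma part1: assumes Mi: "inc y Mi" and g: "g \<in> SS"
  shows "card (Astar Mi \<inter> (g <#\<^bsub>gr\<^esub> derived gr EG)) = card (derived gr EG) \<and>
         card (AA Mi \<inter> (g <#\<^bsub>gr\<^esub> derived gr EG)) = (if g \<in> derived gr EG then 1 else 0)"
proof -
  let ?D = "derived gr EG"
  have gG: "g \<in> EG" using g SS_sub by blast
  have DG: "?D \<subseteq> EG" using D_sub SS_sub by blast
  have cS: "g <#\<^bsub>gr\<^esub> ?D \<subseteq> SS"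
  proof
    fix x assume "x \<in> g <#\<^bsub>gr\<^esub> ?D"
    then obtain h where h: "h \<in> ?D" "x = g \<cdot> h" unfolding coset_img by blast
    thus "x \<in> SS" using D_sub g subgroup.m_closed[OF SS_subgroup] by blast
  qed
  have inj: "inj_on (\<lambda>h. g \<cdot> h) ?D"
  proof (rule inj_onI)
    fix h h' assume h: "h \<in> ?D" "h' \<in> ?D" "g \<cdot> h = g \<cdot> h'"
    have hG: "h \<in> EG" "h' \<in> EG" using h(1,2) DG by blast+
    have "h = gi g \<cdot> (g \<cdot> h)" using hG gG by (simp add: grp.cancel_l)
    also have "\<dots> = gi g \<cdot> (g \<cdot> h')" using h(3) by simp
    also have "\<dots> = h'" using hG gG by (simp add: grp.cancel_l)
    finally show "h = h'" .
  qed
  have i1: "Astar Mi \<inter> (g <#\<^bsub>gr\<^esub> ?D) = g <#\<^bsub>gr\<^esub> ?D" using cS SS_Astar[OF Mi] by blast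
  have c1: "card (g <#\<^bsub>gr\<^esub> ?D) = card ?D" unfolding coset_img using card_image[OF inj] .
  have sub1: "AA Mi \<inter> (g <#\<^bsub>gr\<^esub> ?D) \<subseteq> {g1}" using cS AA_SS[OF Mi] by blast
  have oneAA: "g1 \<in> AA Mi" using subgroup.one_closed[OF AA_subgroup] .
  have "card (AA Mi \<inter> (g <#\<^bsub>gr\<^esub> ?D)) = (if g \<in> ?D then 1 else 0)"
  proof (cases "g \<in> ?D")
    case True
    have "gi g \<in> ?D" using True subgroup.m_inv_closed[OF D_subgroup] by blast
    hence "g \<cdot> gi g \<in> g <#\<^bsub>gr\<^esub> ?D" unfolding coset_img by blast
    hence "g1 \<in> g <#\<^bsub>gr\<^esub> ?D" using gG by simp
    hence "AA Mi \<inter> (g <#\<^bsub>gr\<^esub> ?D) = {g1}" using sub1 oneAA by blast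
    thus ?thesis using True by simp
  next
    case False
    have "g1 \<notin> g <#\<^bsub>gr\<^esub> ?D"
    proof
      assume "g1 \<in> g <#\<^bsub>gr\<^esub> ?D"
      then obtain h where h: "h \<in> ?D" "g1 = g \<cdot> h" unfolding coset_img by blast
      have hG: "h \<in> EG" using h DG by blast
      have "g = gi h" using h(2) gG hG by (metis grp.inv_equality grp.inv_comm carr)
      moreover have "gi h \<in> ?D" using h subgroup.m_inv_closed[OF D_subgroup] by blast
      ultimately show False using False by simp
    qed
    hence "AA Mi \<inter> (g <#\<^bsub>gr\<^esub> ?D) = {}" using sub1 by blast
    thus ?thesis using False by simp
  qed
  thus ?thesis using i1 c1 by simp
qed

lemma part2: assumes Mi: "inc y Mi" and g: "g \<in> SS"
  shows "card (Astar Mi \<inter> conj_class gr g) = card (conj_class gr g) \<and>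
         card (AA Mi \<inter> conj_class gr g) = (if g = g1 then 1 else 0)"
proof -
  have gG: "g \<in> EG" using g SS_sub by blast
  have cS: "conj_class gr g \<subseteq> SS"
    unfolding conj_class_def using SS_normal[OF _ g] by auto
  have i1: "Astar Mi \<inter> conj_class gr g = conj_class gr g" using cS SS_Astar[OF Mi] by blast
  have sub1: "AA Mi \<inter> conj_class gr g \<subseteq> {g1}" using cS AA_SS[OF Mi] by blast
  have oneAA: "g1 \<in> AA Mi" using subgroup.one_closed[OF AA_subgroup] .
  have "card (AA Mi \<inter> conj_class gr g) = (if g = g1 then 1 else 0)"
  proof (cases "g = g1")
    case True
    have "g1 \<cdot> g \<cdot> gi g1 \<in> conj_class gr g" unfolding conj_class_def using grp.one_closed by blast
    hence "g1 \<in> conj_class gr g" using True by simp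
    hence "AA Mi \<inter> conj_class gr g = {g1}" using sub1 oneAA by blast
    thus ?thesis using True by simp
  next
    case False
    have "g1 \<notin> conj_class gr g"
    proof
      assume "g1 \<in> conj_class gr g"
      then obtain h where h: "h \<in> EG" "g1 = h \<cdot> g \<cdot> gi h" unfolding conj_class_def by auto
      have "g = gi h \<cdot> (h \<cdot> g \<cdot> gi h) \<cdot> h" using h(1) gG by (simp add: grp.m_assoc grp.cancel_l)
      also have "\<dots> = gi h \<cdot> g1 \<cdot> h" using h(2)[symmetric] by simp
      also have "\<dots> = g1" using h(1) by simp
      finally show False using False by simp
    qed
    hence "AA Mi \<inter> conj_class gr g = {}" using sub1 by blast
    thus ?thesis using False by simp
  qed
  thus ?thesis using i1 by simp
qed

lemma part3: assumes Mi: "inc y Mi" and Mj: "inc y Mj" and g: "g \<in> Astar Mj" "g \<notin> SS"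
  shows "card (Astar Mi \<inter> conj_class gr g) = (if Mi = Mj then card (conj_class gr g) else 0)"
proof -
  have gG: "g \<in> EG" using g Astar_sub by blast
  have cA: "conj_class gr g \<subseteq> Astar Mj"
    unfolding conj_class_def using Astar_normal2[OF Mj g(1)] by auto
  show ?thesis
  proof (cases "Mi = Mj")
    case True
    hence "Astar Mi \<inter> conj_class gr g = conj_class gr g" using cA by blast
    thus ?thesis using True by simp
  next
    case False
    have "Astar Mi \<inter> conj_class gr g = {}"
    proof (rule ccontr)
      assume "Astar Mi \<inter> conj_class gr g \<noteq> {}"
      then obtain e where e: "e \<in> Astar Mi" "e \<in> conj_class gr g" by blast
      then obtain h where h: "h \<in> EG" "e = h \<cdot> g \<cdot> gi h" unfolding conj_class_def by auto
      have "e \<in> SS" using inter_SS[OF Mi Mj False e(1)] e(2) cA by blast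
      hence "gi h \<cdot> e \<cdot> h \<in> SS" using SS_normal'[OF h(1)] by blast
      moreover have "gi h \<cdot> e \<cdot> h = g" using h gG by (simp add: grp.m_assoc grp.cancel_l)
      ultimately show False using g(2) by simp
    qed
    thus ?thesis using False by simp
  qed
qed

end

lemma s_nonzero: assumes GQ: "GQ inc s" and yN: "\<not> collinear inc y P" shows "s \<noteq> 0"
proof
  assume s0: "s = 0"
  have pl: "card {l. inc P l} = 1" using GQ s0 unfolding GQ_def by simp
  then obtain l0 where l0: "inc P l0" by (metis (mono_tags, lifting) One_nat_def card_1_singletonE mem_Collect_eq singletonI)
  have nyl: "\<not> inc y l0" using yN l0 unfolding collinear_def by blast
  obtain v where v: "inc v l0" "collinear inc y v" using GQ nyl unfolding GQ_def by blast
  have "card {x. inc x l0} = 1" using GQ s0 unfolding GQ_def by simp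
  then obtain u where "{x. inc x l0} = {u}" using card_1_singletonE by blast
  hence "v = u" "P = u" using v(1) l0 by (metis mem_Collect_eq singletonD)+
  hence "v = P" by simp
  thus False using v(2) yN by simp
qed

theorem lemma2p7:
  fixes inc :: "'p::finite \<Rightarrow> 'l::finite \<Rightarrow> bool"
    and s :: nat and P y :: 'p and G :: "('p,'l) aut set"
  assumes "STGQ inc s P G" and "even s"
    and "\<not> collinear inc y P"
  defines "U0 \<equiv> G \<inter> (\<Inter>M\<in>{M. inc y M}. stabAstar inc P G M)"
    and "D \<equiv> derived (aut_group G) G"
  assumes "inc y Mi" and "inc y Mj"
  shows
    "(\<forall>g\<in>U0. card (stabAstar inc P G Mi \<inter> (g <#\<^bsub>aut_group G\<^esub> D)) = card D \<and>
              card (stabA G Mi \<inter> (g <#\<^bsub>aut_group G\<^esub> D)) = (if g \<in> D then 1 else 0))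
     \<and> (\<forall>g\<in>U0. card (stabAstar inc P G Mi \<inter> conj_class (aut_group G) g)
                   = card (conj_class (aut_group G) g) \<and>
              card (stabA G Mi \<inter> conj_class (aut_group G) g)
                   = (if g = \<one>\<^bsub>aut_group G\<^esub> then 1 else 0))
     \<and> (\<forall>g \<in> stabAstar inc P G Mj - U0.
              card (stabAstar inc P G Mi \<inter> conj_class (aut_group G) g)
                = (if Mi = Mj then card (conj_class (aut_group G) g) else 0))"
proof -
  have GQ: "GQ inc s" and grp: "group (aut_group G)" and el: "\<forall>a\<in>G. elation inc P a"
    and reg: "\<forall>x y. \<not> collinear inc x P \<and> \<not> collinear inc y P \<longrightarrow> (\<exists>!a. a \<in> G \<and> fst a x = y)"
    using assms(1) unfolding STGQ_def EGQ_def by blast+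
  obtain C where C: "subgroup C (aut_group G)" "card C = s" "\<forall>a\<in>C. symmetry inc P a"
    using assms(1) unfolding STGQ_def by blast
  have s0: "s \<noteq> 0" using s_nonzero[OF GQ assms(3)] .
  have "s \<noteq> 1" using assms(2) by auto
  hence s2: "s \<ge> 2" using s0 by arith
  have "stg inc s P G y C"
    unfolding stg_def gq_def stg_axioms_def using GQ grp el reg C s2 assms(3) by auto
  then interpret S: stg inc s P G y C .
  have Mi: "inc y Mi" and Mj: "inc y Mj" by fact+
  have U: "U0 = S.SS" using S.U0_eq unfolding U0_def S.Astar_def by simp
  show ?thesis
    unfolding U D_def
    using S.part1[OF Mi] S.part2[OF Mi] S.part3[OF Mi Mj]
    unfolding S.Astar_def S.AA_def by blast
qed

end
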